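(* Let $s>0$ and let $f:[0,\infty)\to\mathbb R$ be twice differentiable with $\int_0^s (f'(u))^2du<\infty$. Let $\omega(\tau,x)$ be a solution of the heat equation $\omega_\tau=\frac12\omega_{xx}$; in particular, $\omega(\tau,x)=\frac1{2\pi}\int_{-\infty}^\infty \Pi(y)e^{-\frac12 y^2\tau+iyx}\,dy$ for an arbitrary function $\Pi$ for which this integral is well defined. Then $$w(t,a)=e^{\frac12\int_t^s (f'(u))^2du+af'(t)}\,\omega\Big(s-t,\;a+\int_t^s f'(u)\,du\Big)$$ is a solution of $$-w_t(t,a)+f''(t)\,a\,w(t,a)=\frac12 w_{aa}(t,a),\quad (t,a)\in[0,s)\times\mathbb R^+.$$ *)

theory Defs
  imports "HOL-Analysis.Analysis"
begin

definition w_fun :: "(real \<Rightarrow> real) \<Rightarrow> real \<Rightarrow> (real \<Rightarrow> real \<Rightarrow> 'v::real_normed_vector)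
                      \<Rightarrow> real \<Rightarrow> real \<Rightarrow> 'v" where
  "w_fun f' s \<omega> t a =
     exp (1/2 * integral {t..s} (\<lambda>u. (f' u)\<^sup>2) + a * f' t) *\<^sub>R
       \<omega> (s - t) (a + integral {t..s} f')"

end

theory Submission
  imports Defs
begin

lemma omega_x_deriv:
  fixes \<omega> \<omega>\<tau> \<omega>x :: "real \<Rightarrow> real \<Rightarrow> 'v::real_normed_vector"
  assumes "((\<lambda>p. \<omega> (fst p) (snd p)) has_derivative
           (\<lambda>h. fst h *\<^sub>R \<omega>\<tau> \<tau> x + snd h *\<^sub>R \<omega>x \<tau> x)) (at (\<tau>, x))"
  shows "((\<lambda>y. \<omega> \<tau> y) has_vector_derivative \<omega>x \<tau> x) (at x)"
proof -
  have p: "((\<lambda>y::real. (\<tau>, y)) has_derivative (\<lambda>h. (0, h))) (at x)"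
    by (auto intro!: derivative_eq_intros)
  have "((\<lambda>y. \<omega> (fst (\<tau>, y)) (snd (\<tau>, y))) has_derivative
     (\<lambda>h. fst (0::real, h) *\<^sub>R \<omega>\<tau> \<tau> x + snd (0::real, h) *\<^sub>R \<omega>x \<tau> x)) (at x)"
    using diff_chain_at[OF p assms] by (simp add: o_def)
  then show ?thesis by (simp add: has_vector_derivative_def)
qed

lemma omega_t_deriv:
  fixes \<omega> \<omega>\<tau> \<omega>x :: "real \<Rightarrow> real \<Rightarrow> 'v::real_normed_vector"
  assumes "((\<lambda>p. \<omega> (fst p) (snd p)) has_derivative
           (\<lambda>h. fst h *\<^sub>R \<omega>\<tau> (s - t) (a + J t) + snd h *\<^sub>R \<omega>x (s - t) (a + J t))) (at (s - t, a + J t))"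
    and "(J has_real_derivative D) (at t within S)"
  shows "((\<lambda>t'. \<omega> (s - t') (a + J t')) has_vector_derivative
           (- \<omega>\<tau> (s - t) (a + J t) + D *\<^sub>R \<omega>x (s - t) (a + J t))) (at t within S)"
proof -
  have p: "((\<lambda>t'. (s - t', a + J t')) has_derivative (\<lambda>h. (- h, D * h))) (at t within S)"
    using assms(2) unfolding has_field_derivative_def
    by (auto intro!: derivative_eq_intros simp: mult.commute)
  have q: "((\<lambda>p. \<omega> (fst p) (snd p)) has_derivative
           (\<lambda>h. fst h *\<^sub>R \<omega>\<tau> (s - t) (a + J t) + snd h *\<^sub>R \<omega>x (s - t) (a + J t)))
         (at ((\<lambda>t'. (s - t', a + J t')) t) within (\<lambda>t'. (s - t', a + J t')) ` S)"
    using has_derivative_at_withinI[OF assms(1)] by simp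
  have "((\<lambda>t'. \<omega> (fst (s - t', a + J t')) (snd (s - t', a + J t'))) has_derivative
     (\<lambda>h. fst (- h, D * h) *\<^sub>R \<omega>\<tau> (s - t) (a + J t) + snd (- h, D * h) *\<^sub>R \<omega>x (s - t) (a + J t))) (at t within S)"
    using diff_chain_within[OF p q] by (simp add: o_def)
  then have "((\<lambda>t'. \<omega> (s - t') (a + J t')) has_derivative
     (\<lambda>h. (- h) *\<^sub>R \<omega>\<tau> (s - t) (a + J t) + (D * h) *\<^sub>R \<omega>x (s - t) (a + J t))) (at t within S)"
    by simp
  then show ?thesis unfolding has_vector_derivative_def
    by (rule has_derivative_eq_rhs) (auto simp: algebra_simps fun_eq_iff)
qed

theorem theorem3:
  fixes s :: real
    and f f' f'' :: "real \<Rightarrow> real"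
    and \<omega> \<omega>\<tau> \<omega>x \<omega>xx :: "real \<Rightarrow> real \<Rightarrow> 'v::real_normed_vector"
  assumes s_pos: "s > 0"
    and f_deriv: "\<And>u. u \<ge> 0 \<Longrightarrow> (f has_real_derivative f' u) (at u within {0..})"
    and f'_deriv: "\<And>u. u \<ge> 0 \<Longrightarrow> (f' has_real_derivative f'' u) (at u within {0..})"
    and f'_sq_int: "(\<lambda>u. (f' u)\<^sup>2) integrable_on {0..s}"
    and \<omega>_diff: "\<And>\<tau> x. \<tau> > 0 \<Longrightarrow>
        ((\<lambda>p. \<omega> (fst p) (snd p)) has_derivative
           (\<lambda>h. fst h *\<^sub>R \<omega>\<tau> \<tau> x + snd h *\<^sub>R \<omega>x \<tau> x)) (at (\<tau>, x))"
    and \<omega>x_diff: "\<And>\<tau> x. \<tau> > 0 \<Longrightarrow> ((\<lambda>y. \<omega>x \<tau> y) has_vector_derivative \<omega>xx \<tau> x) (at x)"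
    and heat: "\<And>\<tau> x. \<tau> > 0 \<Longrightarrow> \<omega>\<tau> \<tau> x = (1/2) *\<^sub>R \<omega>xx \<tau> x"
  shows "\<forall>t \<in> {0..<s}. \<forall>a > 0. \<exists>wt wa waa.
           ((\<lambda>t'. w_fun f' s \<omega> t' a) has_vector_derivative wt) (at t within {0..<s}) \<and>
           (\<forall>b > 0. ((\<lambda>c. w_fun f' s \<omega> t c) has_vector_derivative wa b) (at b)) \<and>
           (wa has_vector_derivative waa) (at a) \<and>
           - wt + (f'' t * a) *\<^sub>R w_fun f' s \<omega> t a = (1/2) *\<^sub>R waa"
proof (intro ballI allI impI)
  fix t a :: real
  assume t: "t \<in> {0..<s}" and a: "a > 0"
  define \<tau> where "\<tau> = s - t"
  have \<tau>: "\<tau> > 0" using t by (simp add: \<tau>_def)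
  define I where "I = (\<lambda>t'. integral {t'..s} (\<lambda>u. (f' u)\<^sup>2))"
  define J where "J = (\<lambda>t'. integral {t'..s} f')"
  have contf': "continuous_on {0..s} f'"
    using f'_deriv DERIV_continuous
    by (metis atLeastAtMost_iff continuous_on_eq_continuous_within continuous_within_subset atLeast_iff subsetI)
  have sub: "{0..<s} \<subseteq> {0..s}" by auto
  have tin: "t \<in> {0..s}" using t by auto
  have dI: "(I has_real_derivative - (f' t)\<^sup>2) (at t within {0..<s})"
    unfolding I_def
    by (rule DERIV_subset[OF integral_has_real_derivative'[OF _ tin] sub])
       (intro continuous_intros contf')
  have dJ: "(J has_real_derivative - f' t) (at t within {0..<s})"
    unfolding J_def
    by (rule DERIV_subset[OF integral_has_real_derivative'[OF contf' tin] sub])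
  have df': "(f' has_real_derivative f'' t) (at t within {0..<s})"
    by (rule DERIV_subset[OF f'_deriv]) (use t in auto)
  define E where "E = (\<lambda>c. exp (1/2 * I t + c * f' t))"
  define X where "X = a + J t"
  define wt where "wt = (E a * (- (f' t)\<^sup>2 / 2 + a * f'' t)) *\<^sub>R \<omega> \<tau> X
      + E a *\<^sub>R (- \<omega>\<tau> \<tau> X + (- f' t) *\<^sub>R \<omega>x \<tau> X)"
  define wa where "wa = (\<lambda>b. (E b * f' t) *\<^sub>R \<omega> \<tau> (b + J t) + E b *\<^sub>R \<omega>x \<tau> (b + J t))"
  define waa where "waa = (E a * f' t * f' t) *\<^sub>R \<omega> \<tau> X + (E a * f' t) *\<^sub>R \<omega>x \<tau> X
      + ((E a * f' t) *\<^sub>R \<omega>x \<tau> X + E a *\<^sub>R \<omega>xx \<tau> X)"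
  have wfun: "w_fun f' s \<omega> t' c = exp (1/2 * I t' + c * f' t') *\<^sub>R \<omega> (s - t') (c + J t')" for t' c
    by (simp add: w_fun_def I_def J_def)
  show "\<exists>wt wa waa.
           ((\<lambda>t'. w_fun f' s \<omega> t' a) has_vector_derivative wt) (at t within {0..<s}) \<and>
           (\<forall>b > 0. ((\<lambda>c. w_fun f' s \<omega> t c) has_vector_derivative wa b) (at b)) \<and>
           (wa has_vector_derivative waa) (at a) \<and>
           - wt + (f'' t * a) *\<^sub>R w_fun f' s \<omega> t a = (1/2) *\<^sub>R waa"
  proof (intro exI conjI allI impI)
    have dexp: "((\<lambda>t'. exp (1/2 * I t' + a * f' t')) has_real_derivative
        E a * (1/2 * (- (f' t)\<^sup>2) + a * f'' t)) (at t within {0..<s})"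
      unfolding E_def
      by (auto intro!: derivative_eq_intros dI df')
    have dom: "((\<lambda>t'. \<omega> (s - t') (a + J t')) has_vector_derivative
           (- \<omega>\<tau> \<tau> X + (- f' t) *\<^sub>R \<omega>x \<tau> X)) (at t within {0..<s})"
      using omega_t_deriv[where J=J and a=a and t=t and s=s and \<omega>=\<omega> and \<omega>\<tau>=\<omega>\<tau> and \<omega>x=\<omega>x, OF \<omega>_diff[OF \<tau>[unfolded \<tau>_def], of "a + J t"] dJ]
      by (simp add: \<tau>_def X_def)
    show "((\<lambda>t'. w_fun f' s \<omega> t' a) has_vector_derivative wt) (at t within {0..<s})"
      unfolding wfun
      using has_vector_derivative_scaleR[OF dexp dom]
      by (simp add: wt_def \<tau>_def E_def X_def algebra_simps)
  next
    fix b :: real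
    have sh: "((\<lambda>c. c + J t) has_vector_derivative 1) (at y)" for y
      by (auto intro!: derivative_eq_intros simp: has_real_derivative_iff_has_vector_derivative[symmetric])
    have dw: "((\<lambda>c. \<omega> \<tau> (c + J t)) has_vector_derivative \<omega>x \<tau> (y + J t)) (at y)" for y
      using vector_diff_chain_at[OF sh omega_x_deriv[where \<omega>=\<omega> and \<omega>\<tau>=\<omega>\<tau> and \<omega>x=\<omega>x and \<tau>=\<tau> and x="y + J t", OF \<omega>_diff[OF \<tau>]]] by (simp add: o_def)
    have dwx: "((\<lambda>c. \<omega>x \<tau> (c + J t)) has_vector_derivative \<omega>xx \<tau> (y + J t)) (at y)" for y
      using vector_diff_chain_at[OF sh \<omega>x_diff[OF \<tau>]] by (simp add: o_def)
    have dE: "(E has_real_derivative E y * f' t) (at y)" for y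
      unfolding E_def by (auto intro!: derivative_eq_intros)
    have dEf: "((\<lambda>c. E c * f' t) has_real_derivative E y * f' t * f' t) (at y)" for y
      using DERIV_mult[OF dE[of y] DERIV_const[of "f' t"]] by simp
    have "w_fun f' s \<omega> t = (\<lambda>c. E c *\<^sub>R \<omega> \<tau> (c + J t))"
      by (simp add: fun_eq_iff wfun E_def \<tau>_def)
    then show "((\<lambda>c. w_fun f' s \<omega> t c) has_vector_derivative wa b) (at b)"
      using has_vector_derivative_scaleR[OF dE[of b] dw[of b]]
      by (simp add: wa_def algebra_simps)
    show "(wa has_vector_derivative waa) (at a)"
      unfolding wa_def
      using has_vector_derivative_add[OF has_vector_derivative_scaleR[OF dEf[of a] dw[of a]]
         has_vector_derivative_scaleR[OF dE[of a] dwx[of a]]]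
      by (simp add: waa_def X_def algebra_simps)
  next
    show "- wt + (f'' t * a) *\<^sub>R w_fun f' s \<omega> t a = (1/2) *\<^sub>R waa"
      apply (simp add: wt_def waa_def heat[OF \<tau>] wfun E_def X_def \<tau>_def[symmetric] algebra_simps power2_eq_square)
      apply (simp flip: scaleR_add_left)
      done
  qed
qed

end
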